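(* A downward-closed set system $\mathcal{S}=(E,\mathcal{I})$ is not a matroid if and only if there exist $I,J\in\mathcal{I}$ with the following three properties: (1) for every $K\in\mathcal{I}|_{I\cup J}$ with $|K|\ge|I|$ we have $K\supseteq I\setminus J$; (2) $|J\setminus I|\ge 1$; (3) $I$ is a maximum-cardinality element of $\mathcal{I}|_{I\cup J}$.
   Context: A set system $(E,\mathcal{I})$ consists of a finite set $E$ and $\mathcal{I}\subseteq 2^E$ with $\emptyset\in\mathcal{I}$. It is downward-closed if $B\in\mathcal{I}$ and $A\subseteq B$ imply $A\in\mathcal{I}$. It is a matroid if it is downward-closed and satisfies the exchange axiom: if $A,B\in\mathcal{I}$ and $|A|>|B|$ then there exists $x\in A\setminus B$ with $B\cup\{x\}\in\mathcal{I}$. For $S\subseteq E$, $\mathcal{I}|_S=\mathcal{I}\cap 2^S$. *)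

theory Defs
  imports Main
begin

definition set_system :: "'a set \<Rightarrow> 'a set set \<Rightarrow> bool" where
  "set_system E \<I> \<longleftrightarrow> finite E \<and> \<I> \<subseteq> Pow E \<and> {} \<in> \<I>"

definition downward_closed :: "'a set set \<Rightarrow> bool" where
  "downward_closed \<I> \<longleftrightarrow> (\<forall>B A. B \<in> \<I> \<and> A \<subseteq> B \<longrightarrow> A \<in> \<I>)"

definition is_matroid :: "'a set \<Rightarrow> 'a set set \<Rightarrow> bool" where
  "is_matroid E \<I> \<longleftrightarrow> downward_closed \<I> \<and>
     (\<forall>A B. A \<in> \<I> \<and> B \<in> \<I> \<and> card A > card B \<longrightarrow> (\<exists>x \<in> A - B. insert x B \<in> \<I>))"

definition restrict_sys :: "'a set set \<Rightarrow> 'a set \<Rightarrow> 'a set set" where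
  "restrict_sys \<I> S = \<I> \<inter> Pow S"

end

theory Submission
  imports Defs
begin

theorem mainTheorem3:
  fixes E :: "'a set" and \<I> :: "'a set set"
  assumes "set_system E \<I>" and "downward_closed \<I>"
  shows "\<not> is_matroid E \<I> \<longleftrightarrow>
    (\<exists>I \<in> \<I>. \<exists>J \<in> \<I>.
       (\<forall>K \<in> restrict_sys \<I> (I \<union> J). card K \<ge> card I \<longrightarrow> I - J \<subseteq> K) \<and>
       card (J - I) \<ge> 1 \<and>
       I \<in> restrict_sys \<I> (I \<union> J) \<and>
       (\<forall>K \<in> restrict_sys \<I> (I \<union> J). card K \<le> card I))"
proof -
  have finE: "finite E" and sub: "\<I> \<subseteq> Pow E" and emp: "{} \<in> \<I>"
    using assms(1) by (auto simp: set_system_def)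
  have fin: "finite X" if "X \<in> \<I>" for X using that sub finE finite_subset by blast
  have dc: "\<And>A B. B \<in> \<I> \<Longrightarrow> A \<subseteq> B \<Longrightarrow> A \<in> \<I>"
    using assms(2) by (auto simp: downward_closed_def)
  have bnd: "card X < Suc (card E)" if "X \<in> \<I>" for X
    using that sub finE card_mono by (metis PowD Suc_le_eq le_refl less_Suc_eq_le subsetD)
  show ?thesis
  proof
    assume nm: "\<not> is_matroid E \<I>"
    then obtain A B where AB: "A \<in> \<I>" "B \<in> \<I>" "card A > card B"
      and viol: "\<forall>x\<in>A - B. insert x B \<notin> \<I>"
      using assms(2) by (auto simp: is_matroid_def)
    define U where "U = A \<union> B"
    obtain M where M: "M \<in> \<I> \<and> M \<subseteq> U" and Mmax: "\<forall>y. y \<in> \<I> \<and> y \<subseteq> U \<longrightarrow> card y \<le> card M"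
      using Lattices_Big.ex_has_greatest_nat[of "\<lambda>X. X \<in> \<I> \<and> X \<subseteq> U" A card "Suc (card E)"] AB bnd
      unfolding U_def by blast
    define P where "P = (\<lambda>X. X \<in> \<I> \<and> X \<subseteq> U \<and> card X = card M)"
    obtain I where PI: "P I" and Imin: "\<forall>y. P y \<longrightarrow> card (I - B) \<le> card (y - B)"
      using ex_has_least_nat[of P M "\<lambda>X. card (X - B)"] M unfolding P_def by blast
    have I: "I \<in> \<I>" "I \<subseteq> U" "card I = card M" using PI P_def by auto
    have BU: "B \<subseteq> U" unfolding U_def by auto
    have c1: "\<forall>K \<in> restrict_sys \<I> (I \<union> B). card K \<ge> card I \<longrightarrow> I - B \<subseteq> K"
    proof (intro ballI impI)
      fix K assume K: "K \<in> restrict_sys \<I> (I \<union> B)" "card K \<ge> card I"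
      hence KI: "K \<in> \<I>" "K \<subseteq> I \<union> B" by (auto simp: restrict_sys_def)
      hence "K \<subseteq> U" using I BU by auto
      hence "card K = card M" using Mmax KI K I by force
      hence "P K" using KI \<open>K \<subseteq> U\<close> P_def by auto
      hence le: "card (I - B) \<le> card (K - B)" using Imin by auto
      have ss: "K - B \<subseteq> I - B" using KI by auto
      have "finite (I - B)" using fin I by auto
      hence "K - B = I - B" using card_seteq[OF _ ss le] by auto
      thus "I - B \<subseteq> K" by auto
    qed
    have c2: "card (B - I) \<ge> 1"
    proof (rule ccontr)
      assume "\<not> card (B - I) \<ge> 1"
      hence "card (B - I) = 0" by simp
      moreover have "finite (B - I)" using fin AB by auto
      ultimately have "B - I = {}" by simp
      hence "B \<subseteq> I" by auto
      have "card A \<le> card I" using Mmax AB I unfolding U_def by auto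
      hence "card B < card I" using AB by auto
      hence "B \<noteq> I" by auto
      then obtain x where x: "x \<in> I" "x \<notin> B" using \<open>B \<subseteq> I\<close> by auto
      have "insert x B \<in> \<I>" using dc[OF I(1)] x \<open>B \<subseteq> I\<close> by auto
      moreover have "x \<in> A - B" using x I U_def by auto
      ultimately show False using viol by auto
    qed
    have c3: "I \<in> restrict_sys \<I> (I \<union> B)" using I by (auto simp: restrict_sys_def)
    have c4: "\<forall>K \<in> restrict_sys \<I> (I \<union> B). card K \<le> card I"
      using Mmax I BU by (auto simp: restrict_sys_def)
    show "\<exists>I \<in> \<I>. \<exists>J \<in> \<I>.
       (\<forall>K \<in> restrict_sys \<I> (I \<union> J). card K \<ge> card I \<longrightarrow> I - J \<subseteq> K) \<and>
       card (J - I) \<ge> 1 \<and>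
       I \<in> restrict_sys \<I> (I \<union> J) \<and>
       (\<forall>K \<in> restrict_sys \<I> (I \<union> J). card K \<le> card I)"
      using c1 c2 c3 c4 I(1) AB(2) by blast
  next
    assume "\<exists>I \<in> \<I>. \<exists>J \<in> \<I>.
       (\<forall>K \<in> restrict_sys \<I> (I \<union> J). card K \<ge> card I \<longrightarrow> I - J \<subseteq> K) \<and>
       card (J - I) \<ge> 1 \<and>
       I \<in> restrict_sys \<I> (I \<union> J) \<and>
       (\<forall>K \<in> restrict_sys \<I> (I \<union> J). card K \<le> card I)"
    then obtain I J where IJ: "I \<in> \<I>" "J \<in> \<I>"
      and h1: "\<forall>K \<in> restrict_sys \<I> (I \<union> J). card K \<ge> card I \<longrightarrow> I - J \<subseteq> K"
      and h2: "card (J - I) \<ge> 1"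
      and h4: "\<forall>K \<in> restrict_sys \<I> (I \<union> J). card K \<le> card I" by blast
    show "\<not> is_matroid E \<I>"
    proof
      assume mat: "is_matroid E \<I>"
      define P where "P = (\<lambda>X. X \<in> \<I> \<and> J \<subseteq> X \<and> X \<subseteq> I \<union> J)"
      have PJ: "P J" using IJ unfolding P_def by auto
      have Pb: "\<forall>y. P y \<longrightarrow> card y < Suc (card E)" using bnd unfolding P_def by auto
      obtain K where PK: "P K" and Kmax: "\<forall>y. P y \<longrightarrow> card y \<le> card K"
        using Lattices_Big.ex_has_greatest_nat[OF PJ Pb] by blast
      have K: "K \<in> \<I>" "J \<subseteq> K" "K \<subseteq> I \<union> J" using PK unfolding P_def by auto
      have "card K \<ge> card I"
      proof (rule ccontr)
        assume "\<not> card K \<ge> card I"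
        hence "card I > card K" by simp
        moreover have "\<forall>A B. A \<in> \<I> \<and> B \<in> \<I> \<and> card A > card B \<longrightarrow> (\<exists>x \<in> A - B. insert x B \<in> \<I>)"
          using mat unfolding is_matroid_def by blast
        ultimately obtain x where x: "x \<in> I - K" "insert x K \<in> \<I>"
          using IJ(1) K(1) by blast
        hence "P (insert x K)" using K unfolding P_def by auto
        hence "card (insert x K) \<le> card K" using Kmax by auto
        moreover have "card (insert x K) = Suc (card K)" using x fin[OF K(1)] by auto
        ultimately show False by auto
      qed
      hence "I - J \<subseteq> K" using h1 K by (auto simp: restrict_sys_def)
      hence KU: "K = I \<union> J" using K by auto
      hence "card (I \<union> J) \<le> card I" using h4 K by (auto simp: restrict_sys_def)
      moreover have "finite (I \<union> J)" using fin IJ by auto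
      moreover have "I \<subset> I \<union> J" proof -
        have "J - I \<noteq> {}" using h2 by (metis card.empty not_one_le_zero)
        thus ?thesis by auto
      qed
      ultimately show False using psubset_card_mono[of "I \<union> J" I] by linarith
    qed
  qed
qed

end
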